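(* Let $X$ be a real Banach space ordered by a generating and normal cone $K$. Let $A$ be a bounded linear operator on $X$ with $A(K)\subseteq K$, and suppose $A=T+F$, where $T$ and $F$ are bounded linear operators on $X$ with $T(K)\subseteq K$, $F(K)\subseteq K$, and $r(T)<1$. Define $R_0:=r\big(F(I-T)^{-1}\big)$ and suppose $R_0>0$. Then $r\!\left(T+\tfrac{1}{R_0}F\right)=1$.
   Context: A cone $K\subseteq X$ is a closed convex set such that $\alpha x\in K$ whenever $x\in K,\ \alpha\ge 0$, and such that $x\in K$, $-x\in K$ imply $x=0$. $K$ is generating if $X=K-K$, and normal if there is $\gamma>0$ such that $0\le x\le y$ implies $\|x\|\le\gamma\|y\|$, where $x\le y$ means $y-x\in K$. An operator $B$ is $K$-preserving (cone-preserving) if $B(K)\subseteq K$. For a bounded operator $B$ on a real Banach space, its spectrum $\sigma(B)$ and spectral radius $r(B)=\sup\{|\lambda|:\lambda\in\sigma(B)\}$ are those of its complexification on $X+iX$. Since $r(T)<1$, $I-T$ is invertible with bounded inverse. *)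

theory Defs
  imports "HOL-Analysis.Analysis"
begin

definition is_cone :: "'a::real_normed_vector set \<Rightarrow> bool" where
  "is_cone K \<longleftrightarrow> closed K \<and> convex K \<and>
     (\<forall>x\<in>K. \<forall>\<alpha>::real. \<alpha> \<ge> 0 \<longrightarrow> \<alpha> *\<^sub>R x \<in> K) \<and>
     (\<forall>x. x \<in> K \<and> - x \<in> K \<longrightarrow> x = 0)"

definition generating_cone :: "'a::real_normed_vector set \<Rightarrow> bool" where
  "generating_cone K \<longleftrightarrow> (\<forall>z. \<exists>x\<in>K. \<exists>y\<in>K. z = x - y)"

definition normal_cone :: "'a::real_normed_vector set \<Rightarrow> bool" where
  "normal_cone K \<longleftrightarrow> (\<exists>\<gamma>>0. \<forall>x y. x \<in> K \<and> y - x \<in> K \<longrightarrow> norm x \<le> \<gamma> * norm y)"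

definition cone_preserving :: "('a::real_normed_vector \<Rightarrow>\<^sub>L 'a) \<Rightarrow> 'a set \<Rightarrow> bool" where
  "cone_preserving B K \<longleftrightarrow> (\<forall>x\<in>K. blinfun_apply B x \<in> K)"

text \<open>The complexification X + iX is represented as X \<times> X (pair (x,y) = x + i y).
  cplx_shift B c is the operator B_C - c I on the complexification.\<close>

definition cplx_shift :: "('a::real_normed_vector \<Rightarrow>\<^sub>L 'a) \<Rightarrow> complex \<Rightarrow> ('a \<times> 'a \<Rightarrow> 'a \<times> 'a)" where
  "cplx_shift B c = (\<lambda>(x, y).
     (blinfun_apply B x - Re c *\<^sub>R x + Im c *\<^sub>R y,
      blinfun_apply B y - Re c *\<^sub>R y - Im c *\<^sub>R x))"

definition op_spectrum :: "('a::real_normed_vector \<Rightarrow>\<^sub>L 'a) \<Rightarrow> complex set" where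
  "op_spectrum B = {c. \<not> (\<exists>g. bounded_linear g \<and>
       (\<forall>z. g (cplx_shift B c z) = z) \<and> (\<forall>z. cplx_shift B c (g z) = z))}"

text \<open>Spectral radius; the 0 is only relevant for the trivial space (empty spectrum).\<close>
definition spectral_radius :: "('a::real_normed_vector \<Rightarrow>\<^sub>L 'a) \<Rightarrow> real" where
  "spectral_radius B = Sup (insert 0 (cmod ` op_spectrum B))"

definition op_inverse :: "('a::real_normed_vector \<Rightarrow>\<^sub>L 'a) \<Rightarrow> ('a \<Rightarrow>\<^sub>L 'a)" where
  "op_inverse S = (THE R. R o\<^sub>L S = id_blinfun \<and> S o\<^sub>L R = id_blinfun)"

end

theory Submission
  imports Defs
begin


definition bp :: "('a::real_normed_vector \<Rightarrow>\<^sub>L 'a) \<Rightarrow> nat \<Rightarrow> ('a \<Rightarrow>\<^sub>L 'a)" where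
  "bp B n = (((o\<^sub>L) B) ^^ n) id_blinfun"

lemma bp_0[simp]: "bp B 0 = id_blinfun" by (simp add: bp_def)
lemma bp_Suc: "bp B (Suc n) = B o\<^sub>L bp B n" by (simp add: bp_def)
lemma bp_apply_Suc: "blinfun_apply (bp B (Suc n)) x = B (bp B n x)" by (simp add: bp_Suc)
lemma bp_apply_Suc': "blinfun_apply (bp B (Suc n)) x = bp B n (B x)"
  by (induction n arbitrary: x) (auto simp: bp_apply_Suc)
lemma bp_norm: "norm (bp B n) \<le> norm B ^ n"
proof (induction n)
  case 0 then show ?case by (simp add: norm_blinfun_id_le)
next
  case (Suc n)
  have "norm (bp B (Suc n)) \<le> norm B * norm (bp B n)" by (simp add: bp_Suc norm_blinfun_compose)
  also have "\<dots> \<le> norm B * norm B ^ n" using Suc by (simp add: mult_left_mono)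
  finally show ?case by simp
qed
lemma bp_scale: "bp (a *\<^sub>R B) n = (a ^ n) *\<^sub>R bp B n"
  by (induction n) (auto intro!: blinfun_eqI simp: bp_apply_Suc blinfun.scaleR_right blinfun.scaleR_left)
lemma bp_add: "blinfun_apply (bp B (m + n)) x = bp B m (bp B n x)"
  by (induction m) (auto simp: bp_apply_Suc)

lemma cone_scale: "is_cone K \<Longrightarrow> x \<in> K \<Longrightarrow> 0 \<le> a \<Longrightarrow> a *\<^sub>R x \<in> K"
  by (auto simp: is_cone_def)

lemma cone_add: assumes "is_cone K" "x \<in> K" "y \<in> K" shows "x + y \<in> K"
proof -
  have "convex K" using assms(1) by (simp add: is_cone_def)
  then have "\<forall>u v. 0\<le>u \<longrightarrow> 0\<le>v \<longrightarrow> u+v=1 \<longrightarrow> u *\<^sub>R x + v *\<^sub>R y \<in> K" using assms(2,3) unfolding convex_def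
    by blast
  then have "(1/2) *\<^sub>R x + (1/2) *\<^sub>R y \<in> K" by simp
  from cone_scale[OF assms(1) this, of 2] show ?thesis by (simp add: scaleR_add_right)
qed

lemma cone_zero: "is_cone K \<Longrightarrow> generating_cone K \<Longrightarrow> 0 \<in> K"
  unfolding generating_cone_def using cone_scale[of K _ 0] by fastforce

lemma cone_sum: assumes "is_cone K" "0 \<in> K" "\<And>i. i \<in> I \<Longrightarrow> f i \<in> K" shows "sum f I \<in> K"
  using assms(3)
proof (induction I rule: infinite_finite_induct)
  case (insert x F) then show ?case using cone_add[OF assms(1)] by auto
qed (use assms in auto)

lemma cone_suminf: assumes "is_cone K" "0 \<in> K" "summable f" "\<And>i. f i \<in> K" shows "suminf f \<in> K"
proof -
  have "closed K" using assms(1) by (simp add: is_cone_def)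
  show ?thesis
  proof (rule closed_sequentially[OF \<open>closed K\<close> _ summable_LIMSEQ[OF assms(3)]])
    fix n show "(\<Sum>i<n. f i) \<in> K" by (rule cone_sum[OF assms(1,2)]) (use assms(4) in auto)
  qed
qed

lemma cp_bp: "cone_preserving B K \<Longrightarrow> x \<in> K \<Longrightarrow> bp B n x \<in> K"
  by (induction n) (auto simp: bp_apply_Suc cone_preserving_def)

section \<open>Uniform boundedness\<close>

lemma ubp:
  fixes f :: "nat \<Rightarrow> ('a::banach \<Rightarrow>\<^sub>L 'b::real_normed_vector)"
  assumes pb: "\<And>x. \<exists>c. \<forall>n. norm (f n x) \<le> c"
  shows "\<exists>c. \<forall>n. norm (f n) \<le> c"
proof -
  define E where "E k = {x. \<forall>n. norm (f n x) \<le> real k}" for k :: nat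
  have clo: "closed (E k)" for k
  proof -
    have "E k = (\<Inter>n. {x. norm (f n x) \<le> real k})" by (auto simp: E_def)
    moreover have "closed {x. norm (f n x) \<le> real k}" for n
      by (intro closed_Collect_le continuous_intros)
    ultimately show ?thesis by auto
  qed
  have un0: "x \<in> \<Union>(range E)" for x
  proof -
    obtain c where "\<forall>n. norm (f n x) \<le> c" using pb by blast
    moreover obtain k where "c \<le> real k" using real_arch_simple by blast
    ultimately have "x \<in> E k" unfolding E_def by (auto intro: order_trans)
    then show "x \<in> \<Union>(range E)" by blast
  qed
  then have un: "\<Union>(range E) = UNIV" by auto
  have "\<exists>k. interior (E k) \<noteq> {}"
  proof (rule ccontr)
    assume "\<not> ?thesis"
    then have "euclidean interior_of \<Union>(range E) = {}"
      by (intro Baire_category_alt) (auto simp: completely_metrizable_space_euclidean clo)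
    with un show False by simp
  qed
  then obtain k x0 where "x0 \<in> interior (E k)" by blast
  then obtain r where r: "r > 0" "ball x0 r \<subseteq> E k" by (meson interior_subset mem_interior order_trans)
  have "norm (f n) \<le> 4 * real k / r" for n
  proof (rule norm_blinfun_bound)
    show "0 \<le> 4 * real k / r" using r by simp
    fix y :: 'a
    show "norm (f n y) \<le> 4 * real k / r * norm y"
    proof (cases "y = 0")
      case True then show ?thesis by simp
    next
      case False
      define z where "z = (r / (2 * norm y)) *\<^sub>R y"
      have nz: "norm z = r / 2" using False r by (simp add: z_def)
      have "x0 + z \<in> E k" using r nz by (intro subsetD[OF r(2)]) (simp add: dist_norm)
      moreover have "x0 \<in> E k" using r by (intro subsetD[OF r(2)]) simp
      ultimately have "norm (f n (x0 + z)) \<le> k" "norm (f n x0) \<le> k" by (auto simp: E_def)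
      moreover have "f n z = f n (x0 + z) - f n x0" by (simp add: blinfun.add_right)
      ultimately have "norm (f n z) \<le> 2 * real k"
        using norm_triangle_ineq4[of "f n (x0 + z)" "f n x0"] by (smt (verit))
      moreover have "f n z = (r / (2 * norm y)) *\<^sub>R f n y" by (simp add: z_def blinfun.scaleR_right)
      ultimately have "(r / (2 * norm y)) * norm (f n y) \<le> 2 * real k" using r by simp
      then show ?thesis using r False by (simp add: field_simps)
    qed
  qed
  then show ?thesis by blast
qed



section \<open>Complexification\<close>

definition cm :: "complex \<Rightarrow> 'a::real_normed_vector \<times> 'a \<Rightarrow> 'a \<times> 'a" where
  "cm a z = (Re a *\<^sub>R fst z - Im a *\<^sub>R snd z, Im a *\<^sub>R fst z + Re a *\<^sub>R snd z)"

definition cB :: "('a::real_normed_vector \<Rightarrow>\<^sub>L 'a) \<Rightarrow> 'a \<times> 'a \<Rightarrow> 'a \<times> 'a" where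
  "cB B z = (B (fst z), B (snd z))"

lemma shift_eq: "cplx_shift B c z = cB B z - cm c z"
  by (cases z) (simp add: cplx_shift_def cB_def cm_def algebra_simps)

lemma cm_mult: "cm a (cm b z) = cm (a * b) z"
  by (cases z) (simp add: cm_def algebra_simps scaleR_add_right scaleR_diff_right)

lemma cm_one[simp]: "cm 1 z = z"
  by (cases z) (simp add: cm_def)

lemma cm_add: "cm a (z + w) = cm a z + cm a w"
  by (simp add: cm_def algebra_simps scaleR_add_right)
lemma cm_diff: "cm a (z - w) = cm a z - cm a w"
  by (simp add: cm_def algebra_simps scaleR_diff_right)
lemma cm_neg: "cm a (- z) = - cm a z"
  by (simp add: cm_def algebra_simps)
lemma cm_scale: "cm a (r *\<^sub>R z) = r *\<^sub>R cm a z"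
  by (simp add: cm_def algebra_simps scaleR_add_right scaleR_diff_right)

lemma cm_norm: "norm (cm a z) \<le> 4 * cmod a * norm z"
proof -
  obtain x y where z: "z = (x, y)" by (cases z)
  have 1: "norm (Re a *\<^sub>R x - Im a *\<^sub>R y) \<le> cmod a * norm x + cmod a * norm y"
    using norm_triangle_ineq4[of "Re a *\<^sub>R x" "Im a *\<^sub>R y"] abs_Re_le_cmod[of a] abs_Im_le_cmod[of a]
      mult_right_mono[OF abs_Re_le_cmod[of a] norm_ge_zero[of x]]
      mult_right_mono[OF abs_Im_le_cmod[of a] norm_ge_zero[of y]]
    by simp
  have 2: "norm (Im a *\<^sub>R x + Re a *\<^sub>R y) \<le> cmod a * norm x + cmod a * norm y"
    using norm_triangle_ineq[of "Im a *\<^sub>R x" "Re a *\<^sub>R y"] abs_Re_le_cmod[of a] abs_Im_le_cmod[of a]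
      mult_right_mono[OF abs_Re_le_cmod[of a] norm_ge_zero[of y]]
      mult_right_mono[OF abs_Im_le_cmod[of a] norm_ge_zero[of x]]
    by simp
  have "norm (cm a z) \<le> norm (Re a *\<^sub>R x - Im a *\<^sub>R y) + norm (Im a *\<^sub>R x + Re a *\<^sub>R y)"
    by (simp add: cm_def z norm_Pair_le)
  also have "\<dots> \<le> 2 * cmod a * (norm x + norm y)" using 1 2 by (simp add: algebra_simps)
  also have "\<dots> \<le> 2 * cmod a * (2 * norm z)"
    using norm_fst_le[of x y] norm_snd_le[of y x] by (intro mult_left_mono) (auto simp: z)
  finally show ?thesis by simp
qed

lemma cm_bl: "bounded_linear (cm a)"
  by (rule bounded_linear_intro[where K="4 * cmod a"]) (auto simp: cm_add cm_scale intro: order_trans[OF cm_norm] simp: mult.commute)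

lemma cB_add: "cB B (z + w) = cB B z + cB B w"
  by (simp add: cB_def blinfun.add_right)
lemma cB_diff: "cB B (z - w) = cB B z - cB B w"
  by (simp add: cB_def blinfun.diff_right)
lemma cB_neg: "cB B (- z) = - cB B z"
  by (simp add: cB_def blinfun.minus_right)
lemma cB_scale: "cB B (r *\<^sub>R z) = r *\<^sub>R cB B z"
  by (simp add: cB_def blinfun.scaleR_right)

lemma cB_norm: "norm (cB B z) \<le> 2 * norm B * norm z"
proof -
  obtain x y where z: "z = (x, y)" by (cases z)
  have "norm (cB B z) \<le> norm (B x) + norm (B y)" by (simp add: cB_def z norm_Pair_le)
  also have "\<dots> \<le> norm B * norm x + norm B * norm y" by (intro add_mono norm_blinfun)
  also have "\<dots> \<le> norm B * norm z + norm B * norm z"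
    using norm_fst_le[of x y] norm_snd_le[of y x] by (intro add_mono mult_left_mono) (auto simp: z)
  finally show ?thesis by linarith
qed

lemma cB_bl: "bounded_linear (cB B)"
  by (rule bounded_linear_intro[where K="2 * norm B"]) (auto simp: cB_add cB_scale intro: order_trans[OF cB_norm] simp: mult.commute)

lemma cB_cm: "cB B (cm a z) = cm a (cB B z)"
  by (simp add: cB_def cm_def blinfun.add_right blinfun.diff_right blinfun.scaleR_right)

lemma cB_bp_Suc: "cB (bp B n) (cB B z) = cB (bp B (Suc n)) z"
  by (simp add: cB_def bp_apply_Suc')
lemma cB_bp_Suc': "cB B (cB (bp B n) z) = cB (bp B (Suc n)) z"
  by (simp add: cB_def bp_apply_Suc)
lemma cB_id[simp]: "cB id_blinfun z = z"
  by (simp add: cB_def)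

section \<open>Spectrum outside a disc\<close>

lemma spec_out:
  fixes B :: "'a::banach \<Rightarrow>\<^sub>L 'a"
  assumes bnd: "\<And>n. norm (bp B n) \<le> c * s ^ n" and s: "0 \<le> s" "s < cmod \<mu>"
  shows "\<mu> \<notin> op_spectrum B"
proof -
  have mu0: "\<mu> \<noteq> 0" using s by auto
  define q where "q = s / cmod \<mu>"
  have q: "0 \<le> q" "q < 1" using s by (auto simp: q_def divide_less_eq)
  have c0: "0 \<le> c" using order_trans[OF norm_ge_zero bnd[of 0]] by simp
  define u where "u z n = cm (inverse \<mu> ^ n) (cB (bp B n) z)" for z n
  have un: "norm (u z n) \<le> (8 * c * norm z) * q ^ n" for z n
  proof -
    have "norm (u z n) \<le> 4 * cmod (inverse \<mu> ^ n) * norm (cB (bp B n) z)"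
      unfolding u_def by (rule cm_norm)
    also have "\<dots> \<le> 4 * cmod (inverse \<mu> ^ n) * (2 * (c * s ^ n) * norm z)"
      by (intro mult_left_mono order_trans[OF cB_norm] mult_right_mono bnd) auto
    also have "\<dots> = (8 * c * norm z) * (cmod (inverse \<mu>) ^ n * s ^ n)"
      by (simp add: norm_power)
    also have "cmod (inverse \<mu>) ^ n * s ^ n = q ^ n"
      by (simp add: q_def norm_inverse power_mult_distrib[symmetric] divide_inverse mult.commute)
    finally show ?thesis .
  qed
  have sn: "summable (\<lambda>n. norm (u z n))" for z
    by (rule summable_comparison_test[OF _ summable_mult[OF summable_geometric[of q], of "8 * c * norm z"]])
       (use un q in auto)
  have su: "summable (u z)" for z using sn by (rule summable_norm_cancel)
  define U where "U z = suminf (u z)" for z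
  have u_add: "u (z + w) n = u z n + u w n" for z w n by (simp add: u_def cB_add cm_add)
  have u_scale: "u (r *\<^sub>R z) n = r *\<^sub>R u z n" for z r n by (simp add: u_def cB_scale cm_scale)
  have U_bl: "bounded_linear U"
  proof (rule bounded_linear_intro[where K="8 * c / (1 - q)"])
    fix z w show "U (z + w) = U z + U w" unfolding U_def u_add by (rule suminf_add[OF su su, symmetric])
  next
    fix r z show "U (r *\<^sub>R z) = r *\<^sub>R U z" unfolding U_def u_scale by (rule suminf_scaleR_right[OF su, symmetric])
  next
    fix z
    have "norm (U z) \<le> (\<Sum>n. norm (u z n))" unfolding U_def by (rule summable_norm[OF sn])
    also have "\<dots> \<le> (\<Sum>n. (8 * c * norm z) * q ^ n)"
      by (rule suminf_le[OF un sn summable_mult[OF summable_geometric]]) (use q in auto)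
    also have "\<dots> = (8 * c * norm z) * (1 / (1 - q))"
      by (subst suminf_mult) (use q in \<open>auto intro: summable_geometric simp: suminf_geometric\<close>)
    finally show "norm (U z) \<le> norm z * (8 * c / (1 - q))" by (simp add: field_simps)
  qed
  have u0: "u z 0 = z" for z by (simp add: u_def)
  have uB: "cB B (u z n) = cm \<mu> (u z (Suc n))" for z n
  proof -
    have "cm \<mu> (u z (Suc n)) = cm (\<mu> * inverse \<mu> ^ Suc n) (cB (bp B (Suc n)) z)"
      by (simp add: u_def cm_mult)
    also have "\<mu> * inverse \<mu> ^ Suc n = inverse \<mu> ^ n" using mu0 by (simp add: field_simps)
    finally show ?thesis by (simp add: u_def cB_cm cB_bp_Suc')
  qed
  have uB2: "u (cB B z) n = cm \<mu> (u z (Suc n))" for z n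
  proof -
    have "cm \<mu> (u z (Suc n)) = cm (\<mu> * inverse \<mu> ^ Suc n) (cB (bp B (Suc n)) z)"
      by (simp add: u_def cm_mult)
    also have "\<mu> * inverse \<mu> ^ Suc n = inverse \<mu> ^ n" using mu0 by (simp add: field_simps)
    finally show ?thesis by (simp add: u_def cB_bp_Suc)
  qed
  have uM: "u (cm \<mu> z) n = cm \<mu> (u z n)" for z n
    by (simp add: u_def cB_cm cm_mult mult.commute)
  have cmi: "cm (inverse \<mu>) (cm \<mu> w) = w" "cm \<mu> (cm (inverse \<mu>) w) = w" for w
    using mu0 by (simp_all add: cm_mult)
  have Ushift: "U z - z = (\<Sum>n. u z (Suc n))" for z
    unfolding U_def using suminf_split_head[OF su[of z]] u0 by simp
  define g where "g z = - cm (inverse \<mu>) (U z)" for z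
  have g_bl: "bounded_linear g" unfolding g_def
    by (intro bounded_linear_minus bounded_linear_compose[OF cm_bl U_bl])
  have cmsum: "cm a (suminf f) = (\<Sum>n. cm a (f n))" if "summable f" for a f
    using bounded_linear.suminf[OF cm_bl that] by simp
  have cBsum: "cB B (suminf f) = (\<Sum>n. cB B (f n))" if "summable f" for f
    using bounded_linear.suminf[OF cB_bl that] by simp
  have suS: "summable (\<lambda>n. u z (Suc n))" for z using su[of z] by (simp add: summable_Suc_iff)
  have g1: "cplx_shift B \<mu> (g z) = z" for z
  proof -
    have "cB B (U z) = (\<Sum>n. cm \<mu> (u z (Suc n)))" unfolding U_def cBsum[OF su] uB ..
    also have "\<dots> = cm \<mu> (U z - z)" unfolding Ushift cmsum[OF suS] ..
    finally have "cB B (U z) = cm \<mu> (U z - z)" .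
    then have "cB B (g z) = - (U z - z)"
      by (simp add: g_def cB_neg cB_cm cmi)
    moreover have "cm \<mu> (g z) = - U z" by (simp add: g_def cmi cm_neg)
    ultimately show ?thesis by (simp add: shift_eq)
  qed
  have g2: "g (cplx_shift B \<mu> z) = z" for z
  proof -
    have "U (cB B z) = (\<Sum>n. cm \<mu> (u z (Suc n)))" unfolding U_def uB2 ..
    also have "\<dots> = cm \<mu> (U z - z)" unfolding Ushift cmsum[OF suS] ..
    finally have a: "U (cB B z) = cm \<mu> (U z - z)" .
    have b: "U (cm \<mu> z) = cm \<mu> (U z)" unfolding U_def uM cmsum[OF su] ..
    have "U (cplx_shift B \<mu> z) = U (cB B z) - U (cm \<mu> z)"
      by (simp add: shift_eq linear_diff[OF bounded_linear.linear[OF U_bl]])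
    also have "\<dots> = cm \<mu> (U z - z) - cm \<mu> (U z)" using a b by simp
    also have "\<dots> = - cm \<mu> z" by (simp add: cm_diff)
    finally show ?thesis by (simp add: g_def cmi cm_neg)
  qed
  show ?thesis unfolding op_spectrum_def using g_bl g1 g2 by blast
qed



lemma sr_bdd: "bdd_above (cmod ` op_spectrum (B :: 'a::banach \<Rightarrow>\<^sub>L 'a))"
proof -
  have "cmod \<mu> \<le> norm B" if "\<mu> \<in> op_spectrum B" for \<mu>
    using spec_out[of B 1 "norm B" \<mu>] bp_norm[of B] that by force
  then show ?thesis by (intro bdd_aboveI2) auto
qed

lemma sr_nonneg: "0 \<le> spectral_radius (B :: 'a::banach \<Rightarrow>\<^sub>L 'a)"
  unfolding spectral_radius_def by (rule cSup_upper) (use sr_bdd in auto)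

lemma sr_upper: "\<mu> \<in> op_spectrum B \<Longrightarrow> cmod \<mu> \<le> spectral_radius (B :: 'a::banach \<Rightarrow>\<^sub>L 'a)"
  unfolding spectral_radius_def by (rule cSup_upper) (use sr_bdd in auto)

lemma sr_le:
  fixes B :: "'a::banach \<Rightarrow>\<^sub>L 'a"
  assumes "\<And>n. norm (bp B n) \<le> c * s ^ n" "0 \<le> s"
  shows "spectral_radius B \<le> s"
  unfolding spectral_radius_def
proof (rule cSup_least)
  fix x assume "x \<in> insert 0 (cmod ` op_spectrum B)"
  then show "x \<le> s" using spec_out[OF assms] assms(2) by (force simp: not_less)
qed auto

lemma inv_unique:
  assumes "R1 o\<^sub>L A = id_blinfun" "A o\<^sub>L R2 = id_blinfun" shows "R1 = R2"
proof (rule blinfun_eqI)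
  fix x
  have "R1 x = R1 (A (R2 x))" using assms(2) by (metis blinfun_apply_blinfun_compose id_blinfun.rep_eq)
  also have "\<dots> = R2 x" using assms(1) by (metis blinfun_apply_blinfun_compose id_blinfun.rep_eq)
  finally show "R1 x = R2 x" .
qed

lemma op_inverse_eq:
  assumes "R o\<^sub>L A = id_blinfun" "A o\<^sub>L R = id_blinfun" shows "op_inverse A = R"
  unfolding op_inverse_def
proof (rule the_equality)
  show "R o\<^sub>L A = id_blinfun \<and> A o\<^sub>L R = id_blinfun" using assms ..
  fix R' assume "R' o\<^sub>L A = id_blinfun \<and> A o\<^sub>L R' = id_blinfun"
  then show "R' = R" using inv_unique assms by blast
qed

lemma real_inv:
  fixes B :: "'a::banach \<Rightarrow>\<^sub>L 'a"
  assumes "spectral_radius B < t"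
  shows "\<exists>R. R o\<^sub>L (t *\<^sub>R id_blinfun - B) = id_blinfun \<and> (t *\<^sub>R id_blinfun - B) o\<^sub>L R = id_blinfun"
proof -
  have "complex_of_real t \<notin> op_spectrum B"
    using sr_upper[of "complex_of_real t" B] assms by auto
  then obtain g where g: "bounded_linear g" "\<And>z. g (cplx_shift B (complex_of_real t) z) = z"
    "\<And>z. cplx_shift B (complex_of_real t) (g z) = z"
    unfolding op_spectrum_def by blast
  have sh: "cplx_shift B (complex_of_real t) (x, y) = (B x - t *\<^sub>R x, B y - t *\<^sub>R y)" for x y
    by (simp add: cplx_shift_def)
  have g0: "g 0 = 0" using g(1) by (rule linear_0[OF bounded_linear.linear])
  have snd0: "snd (g (x, 0)) = 0" for x
  proof -
    obtain p q where pq: "g (x, 0) = (p, q)" by (cases "g (x, 0)")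
    have "cplx_shift B (complex_of_real t) (p, q) = (x, 0)" using g(3)[of "(x,0)"] pq by simp
    then have "B q - t *\<^sub>R q = 0" by (simp add: sh)
    then have "cplx_shift B (complex_of_real t) (q, 0) = 0" by (simp add: sh zero_prod_def)
    then have "(q, 0) = g 0" using g(2)[of "(q, 0)"] by simp
    then show ?thesis using pq g0 by (simp add: zero_prod_def)
  qed
  define R0 where "R0 x = - fst (g (x, 0))" for x
  have bl: "bounded_linear R0" unfolding R0_def
    by (intro bounded_linear_minus bounded_linear_compose[OF bounded_linear_fst]
        bounded_linear_compose[OF g(1)] bounded_linear_Pair bounded_linear_ident bounded_linear_zero)
  have lin: "linear g" using g(1) bounded_linear.linear by blast
  have e1: "R0 (t *\<^sub>R x - B x) = x" for x
  proof -
    have "(t *\<^sub>R x - B x, 0::'a) = - cplx_shift B (complex_of_real t) (x, 0)" by (simp add: sh)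
    then have "g (t *\<^sub>R x - B x, 0) = - x'" if "x' = g (cplx_shift B (complex_of_real t) (x, 0))" for x'
      using that linear_neg[OF lin] by simp
    then show ?thesis unfolding R0_def using g(2) by simp
  qed
  have e2: "t *\<^sub>R R0 x - B (R0 x) = x" for x
  proof -
    obtain p q where pq: "g (x, 0) = (p, q)" by (cases "g (x, 0)")
    have q: "q = 0" using snd0[of x] pq by simp
    have "cplx_shift B (complex_of_real t) (p, q) = (x, 0)" using g(3)[of "(x,0)"] pq by simp
    then have "B p - t *\<^sub>R p = x" by (simp add: sh)
    then show ?thesis using pq by (auto simp: R0_def blinfun.minus_right algebra_simps)
  qed
  show ?thesis
    by (rule exI[of _ "Blinfun R0"])
       (auto intro!: blinfun_eqI simp: bounded_linear_Blinfun_apply[OF bl] e1 e2 blinfun.diff_left blinfun.scaleR_left)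
qed

section \<open>Perturbation of inverses\<close>

lemma perturb:
  fixes A R E :: "'a::banach \<Rightarrow>\<^sub>L 'a"
  assumes RA: "R o\<^sub>L A = id_blinfun" and AR: "A o\<^sub>L R = id_blinfun" and q1: "norm R * norm E < 1"
  shows "\<exists>R'. R' o\<^sub>L (A - E) = id_blinfun \<and> (A - E) o\<^sub>L R' = id_blinfun \<and>
     norm R' \<le> norm R / (1 - norm R * norm E) \<and> (\<forall>x. (\<lambda>k. bp (R o\<^sub>L E) k (R x)) sums R' x)"
proof -
  define q where "q = norm R * norm E"
  define P where "P = R o\<^sub>L E"
  have q: "0 \<le> q" "q < 1" using q1 by (auto simp: q_def)
  have nP: "norm P \<le> q" unfolding P_def q_def by (rule norm_blinfun_compose)
  have nb: "norm (bp P k y) \<le> norm y * q ^ k" for k y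
  proof -
    have "norm (bp P k y) \<le> norm (bp P k) * norm y" by (rule norm_blinfun)
    also have "\<dots> \<le> q ^ k * norm y"
      by (intro mult_right_mono order_trans[OF bp_norm] power_mono nP) auto
    finally show ?thesis by (simp add: mult.commute)
  qed
  have sn: "summable (\<lambda>k. norm (bp P k y))" for y
    by (rule summable_comparison_test[OF _ summable_mult[OF summable_geometric[of q], of "norm y"]])
       (use nb q in auto)
  have su: "summable (\<lambda>k. bp P k y)" for y using sn by (rule summable_norm_cancel)
  define V where "V y = (\<Sum>k. bp P k y)" for y
  have V_bl: "bounded_linear V"
  proof (rule bounded_linear_intro[where K="1 / (1 - q)"])
    fix z w show "V (z + w) = V z + V w" unfolding V_def blinfun.add_right by (rule suminf_add[OF su su, symmetric])
  next
    fix r z show "V (r *\<^sub>R z) = r *\<^sub>R V z" unfolding V_def blinfun.scaleR_right by (rule suminf_scaleR_right[OF su, symmetric])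
  next
    fix z
    have "norm (V z) \<le> (\<Sum>n. norm (bp P n z))" unfolding V_def by (rule summable_norm[OF sn])
    also have "\<dots> \<le> (\<Sum>n. norm z * q ^ n)"
      by (rule suminf_le[OF nb sn summable_mult[OF summable_geometric]]) (use q in auto)
    also have "\<dots> = norm z * (1 / (1 - q))"
      by (subst suminf_mult) (use q in \<open>auto intro: summable_geometric simp: suminf_geometric\<close>)
    finally show "norm (V z) \<le> norm z * (1 / (1 - q))" by simp
  qed
  define R' where "R' = Blinfun (\<lambda>x. V (R x))"
  have R'bl: "bounded_linear (\<lambda>x. V (R x))" by (rule bounded_linear_compose[OF V_bl blinfun.bounded_linear_right])
  have R'a: "R' x = V (R x)" for x unfolding R'_def using R'bl by (simp add: bounded_linear_Blinfun_apply)
  have RA': "R (A x) = x" for x using RA by (metis blinfun_apply_blinfun_compose id_blinfun.rep_eq)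
  have AR': "A (R x) = x" for x using AR by (metis blinfun_apply_blinfun_compose id_blinfun.rep_eq)
  have Vsplit: "V y = y + (\<Sum>k. bp P (Suc k) y)" for y
    unfolding V_def using suminf_split_head[OF su[of y]] by simp
  have i1: "R' o\<^sub>L (A - E) = id_blinfun"
  proof (rule blinfun_eqI)
    fix x
    have "R' ((A - E) x) = V x - V (P x)" using linear_diff[OF bounded_linear.linear[OF V_bl]]
      by (simp add: R'a blinfun.diff_left blinfun.diff_right RA' P_def)
    also have "V (P x) = (\<Sum>k. bp P (Suc k) x)" unfolding V_def by (simp add: bp_apply_Suc')
    finally show "(R' o\<^sub>L (A - E)) x = id_blinfun x" using Vsplit[of x] by simp
  qed
  have i2: "(A - E) o\<^sub>L R' = id_blinfun"
  proof (rule blinfun_eqI)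
    fix x
    have sA: "summable (\<lambda>k. A (bp P k (R x)))" by (rule bounded_linear.summable[OF blinfun.bounded_linear_right su])
    have sE: "summable (\<lambda>k. E (bp P k (R x)))" by (rule bounded_linear.summable[OF blinfun.bounded_linear_right su])
    have "A (V (R x)) = (\<Sum>k. A (bp P k (R x)))" unfolding V_def
      by (rule bounded_linear.suminf[OF blinfun.bounded_linear_right su])
    also have "\<dots> = A (bp P 0 (R x)) + (\<Sum>k. A (bp P (Suc k) (R x)))"
      using suminf_split_head[OF sA] by simp
    also have "(\<lambda>k. A (bp P (Suc k) (R x))) = (\<lambda>k. E (bp P k (R x)))"
      by (simp add: bp_apply_Suc P_def AR')
    finally have a: "A (V (R x)) = x + (\<Sum>k. E (bp P k (R x)))" by (simp add: AR')
    have b: "E (V (R x)) = (\<Sum>k. E (bp P k (R x)))" unfolding V_def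
      by (rule bounded_linear.suminf[OF blinfun.bounded_linear_right su])
    show "((A - E) o\<^sub>L R') x = id_blinfun x" using a b by (simp add: R'a blinfun.diff_left)
  qed
  have nR': "norm R' \<le> norm R / (1 - q)"
  proof (rule norm_blinfun_bound)
    show "0 \<le> norm R / (1 - q)" using q by simp
    fix x
    have "norm (R' x) \<le> norm (R x) * (1 / (1 - q))"
      unfolding R'a V_def
      using summable_norm[OF sn[of "R x"]] suminf_le[OF nb[of _ "R x"] sn summable_mult[OF summable_geometric[of q]]]
        suminf_mult[OF summable_geometric[of q], of "norm (R x)"] suminf_geometric[of q] q by auto
    also have "\<dots> \<le> norm R * norm x * (1 / (1 - q))" using q by (intro mult_right_mono norm_blinfun) auto
    finally show "norm (R' x) \<le> norm R / (1 - q) * norm x" by simp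
  qed
  have "(\<lambda>k. bp (R o\<^sub>L E) k (R x)) sums R' x" for x
    unfolding R'a V_def P_def[symmetric] using su by (rule summable_sums)
  then show ?thesis using i1 i2 nR' unfolding q_def by blast
qed

lemma cone_sums: assumes "is_cone K" "0 \<in> K" "f sums l" "\<And>i. f i \<in> K" shows "l \<in> K"
  using cone_suminf[OF assms(1,2) sums_summable[OF assms(3)] assms(4)] sums_unique[OF assms(3)] by simp

lemma perturb_pos:
  fixes R E R' :: "'a::real_normed_vector \<Rightarrow>\<^sub>L 'a"
  assumes "is_cone K" "0 \<in> K" "cone_preserving R K" "cone_preserving E K"
    "\<forall>x. (\<lambda>k. bp (R o\<^sub>L E) k (R x)) sums R' x"
  shows "cone_preserving R' K"
  unfolding cone_preserving_def
proof
  fix x assume x: "x \<in> K"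
  have "cone_preserving (R o\<^sub>L E) K" using assms(3,4) by (auto simp: cone_preserving_def)
  then show "R' x \<in> K"
    using x assms(3) by (intro cone_sums[OF assms(1,2) assms(5)[rule_format]] cp_bp) (auto simp: cone_preserving_def)
qed



lemma id_shift_eq: "t *\<^sub>R id_blinfun - B - (t - v) *\<^sub>R id_blinfun = v *\<^sub>R id_blinfun - (B :: 'a::real_normed_vector \<Rightarrow>\<^sub>L 'a)"
  by (auto intro!: blinfun_eqI simp: blinfun.diff_left blinfun.scaleR_left algebra_simps)

lemma step:
  fixes B R :: "'a::banach \<Rightarrow>\<^sub>L 'a"
  assumes RA: "R o\<^sub>L (t *\<^sub>R id_blinfun - B) = id_blinfun" and AR: "(t *\<^sub>R id_blinfun - B) o\<^sub>L R = id_blinfun"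
    and q: "\<bar>t - v\<bar> * norm R < 1"
  shows "\<exists>R'. R' o\<^sub>L (v *\<^sub>R id_blinfun - B) = id_blinfun \<and> (v *\<^sub>R id_blinfun - B) o\<^sub>L R' = id_blinfun \<and>
     norm R' \<le> norm R / (1 - \<bar>t - v\<bar> * norm R) \<and>
     (is_cone K \<longrightarrow> 0 \<in> K \<longrightarrow> cone_preserving R K \<longrightarrow> v \<le> t \<longrightarrow> cone_preserving R' K)"
proof -
  define E :: "'a \<Rightarrow>\<^sub>L 'a" where "E = (t - v) *\<^sub>R id_blinfun"
  have nE: "norm E \<le> \<bar>t - v\<bar>" unfolding E_def using norm_blinfun_id_le[where 'a='a]
    by (simp add: mult_left_le)
  have q2: "norm R * norm E \<le> \<bar>t - v\<bar> * norm R"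
    using mult_left_mono[OF nE norm_ge_zero[of R]] by (simp add: mult.commute)
  have qE: "norm R * norm E < 1" using q q2 by linarith
  obtain R' where R': "R' o\<^sub>L (t *\<^sub>R id_blinfun - B - E) = id_blinfun"
    "(t *\<^sub>R id_blinfun - B - E) o\<^sub>L R' = id_blinfun"
    "norm R' \<le> norm R / (1 - norm R * norm E)"
    "\<forall>x. (\<lambda>k. bp (R o\<^sub>L E) k (R x)) sums R' x"
    using perturb[OF RA AR qE] by blast
  have "norm R / (1 - norm R * norm E) \<le> norm R / (1 - \<bar>t - v\<bar> * norm R)"
    using q q2 by (intro divide_left_mono) (auto intro: mult_pos_pos)
  moreover have "cone_preserving R' K" if "is_cone K" "0 \<in> K" "cone_preserving R K" "v \<le> t"
  proof (rule perturb_pos[OF that(1,2,3) _ R'(4)])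
    show "cone_preserving E K" using that by (auto simp: cone_preserving_def E_def blinfun.scaleR_left intro: cone_scale)
  qed
  ultimately show ?thesis using R' unfolding E_def id_shift_eq by (intro exI[of _ R']) auto
qed

lemma dom:
  fixes B C R :: "'a::banach \<Rightarrow>\<^sub>L 'a"
  assumes K: "is_cone K" "generating_cone K" "normal_cone K"
    and pB: "cone_preserving B K" and pCB: "cone_preserving (C - B) K"
    and s: "0 < s" and RC: "R o\<^sub>L (s *\<^sub>R id_blinfun - C) = id_blinfun"
    and CR: "(s *\<^sub>R id_blinfun - C) o\<^sub>L R = id_blinfun" and pR: "cone_preserving R K"
  shows "\<exists>c. \<forall>n. norm (bp B n) \<le> c * s ^ n"
proof -
  have K0: "0 \<in> K" using cone_zero K by blast
  obtain \<gamma> where \<gamma>: "\<gamma> > 0" "\<And>x y. x \<in> K \<Longrightarrow> y - x \<in> K \<Longrightarrow> norm x \<le> \<gamma> * norm y"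
    using K(3) unfolding normal_cone_def by blast
  have pC: "C x \<in> K" if "x \<in> K" for x
  proof -
    have "C x = B x + (C - B) x" by (simp add: blinfun.diff_left)
    then show ?thesis using cone_add[OF K(1)] pB pCB that by (auto simp: cone_preserving_def)
  qed
  have pC': "cone_preserving C K" using pC by (simp add: cone_preserving_def)
  have dom1: "bp C n x - bp B n x \<in> K" if "x \<in> K" for n x
  proof (induction n)
    case 0 then show ?case using K0 by simp
  next
    case (Suc n)
    have "bp C (Suc n) x - bp B (Suc n) x = C (bp C n x - bp B n x) + (C - B) (bp B n x)"
      by (simp add: bp_apply_Suc blinfun.diff_right blinfun.diff_left)
    then show ?case using Suc pC cp_bp[OF pB that] pCB cone_add[OF K(1)] by (auto simp: cone_preserving_def)
  qed
  have sR: "R y = (1 / s) *\<^sub>R (y + C (R y))" for y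
  proof -
    have "s *\<^sub>R R y - C (R y) = y" using CR
      by (metis blinfun_apply_blinfun_compose id_blinfun.rep_eq blinfun.diff_left blinfun.scaleR_left)
    then have e: "s *\<^sub>R R y = y + C (R y)" by (metis diff_eq_eq add.commute)
    show ?thesis using s by (simp add: e[symmetric])
  qed
  have ident: "R y = (\<Sum>k<N. (1 / s ^ Suc k) *\<^sub>R bp C k y) + (1 / s ^ N) *\<^sub>R bp C N (R y)" for y N
  proof (induction N)
    case 0 then show ?case by simp
  next
    case (Suc N)
    have "bp C N (R y) = (1 / s) *\<^sub>R bp C N y + (1 / s) *\<^sub>R bp C (Suc N) (R y)"
      by (subst sR) (simp add: blinfun.scaleR_right blinfun.add_right bp_apply_Suc' scaleR_add_right)
    then have "(1 / s ^ N) *\<^sub>R bp C N (R y) = (1 / s ^ Suc N) *\<^sub>R bp C N y + (1 / s ^ Suc N) *\<^sub>R bp C (Suc N) (R y)"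
      by (simp add: scaleR_add_right mult.commute)
    then show ?case using Suc by (simp add: add.assoc)
  qed
  have bndK: "norm (bp B n x) \<le> (\<gamma> * \<gamma> * s * norm (R x)) * s ^ n" if x: "x \<in> K" for x n
  proof -
    have "R x - (1 / s ^ Suc n) *\<^sub>R bp C n x = (\<Sum>k<n. (1 / s ^ Suc k) *\<^sub>R bp C k x) + (1 / s ^ Suc n) *\<^sub>R bp C (Suc n) (R x)"
      using ident[of x "Suc n"] by (simp add: algebra_simps)
    moreover have "(\<Sum>k<n. (1 / s ^ Suc k) *\<^sub>R bp C k x) \<in> K"
      using s x by (intro cone_sum[OF K(1) K0] cone_scale[OF K(1)] cp_bp[OF pC']) auto
    moreover have "(1 / s ^ Suc n) *\<^sub>R bp C (Suc n) (R x) \<in> K"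
      using s x pR by (intro cone_scale[OF K(1)] cp_bp[OF pC']) (auto simp: cone_preserving_def)
    ultimately have "R x - (1 / s ^ Suc n) *\<^sub>R bp C n x \<in> K" using cone_add[OF K(1)] by simp
    moreover have "(1 / s ^ Suc n) *\<^sub>R bp C n x \<in> K" using s x by (intro cone_scale[OF K(1)] cp_bp[OF pC']) auto
    ultimately have "norm ((1 / s ^ Suc n) *\<^sub>R bp C n x) \<le> \<gamma> * norm (R x)" using \<gamma> by blast
    then have 1: "norm (bp C n x) \<le> \<gamma> * norm (R x) * s ^ Suc n" using s by (simp add: field_simps)
    have 2: "norm (bp B n x) \<le> \<gamma> * norm (bp C n x)" using \<gamma>(2)[OF cp_bp[OF pB x] dom1[OF x]] .
    have "norm (bp B n x) \<le> \<gamma> * (\<gamma> * norm (R x) * s ^ Suc n)"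
      using 1 2 \<gamma>(1) by (meson mult_left_mono less_imp_le order_trans)
    then show ?thesis by (simp add: algebra_simps)
  qed
  define f where "f n = (1 / s ^ n) *\<^sub>R bp B n" for n
  have "\<exists>c. \<forall>n. norm (f n x) \<le> c" for x
  proof -
    obtain u v where uv: "u \<in> K" "v \<in> K" "x = u - v" using K(2) unfolding generating_cone_def by blast
    have "norm (f n x) \<le> \<gamma> * \<gamma> * s * norm (R u) + \<gamma> * \<gamma> * s * norm (R v)" for n
    proof -
      have "norm (bp B n x) \<le> norm (bp B n u) + norm (bp B n v)"
        using uv(3) by (simp add: blinfun.diff_right norm_triangle_ineq4)
      also have "\<dots> \<le> (\<gamma> * \<gamma> * s * norm (R u) + \<gamma> * \<gamma> * s * norm (R v)) * s ^ n"
        using bndK[OF uv(1)] bndK[OF uv(2)] by (simp add: algebra_simps add_mono)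
      finally show ?thesis using s by (simp add: f_def blinfun.scaleR_left field_simps)
    qed
    then show ?thesis by blast
  qed
  then obtain c where c: "\<And>n. norm (f n) \<le> c" using ubp by blast
  have "norm (bp B n) \<le> c * s ^ n" for n
    using c[of n] s by (simp add: f_def field_simps)
  then show ?thesis by blast
qed

lemma kl:
  fixes B R :: "'a::banach \<Rightarrow>\<^sub>L 'a"
  assumes K: "is_cone K" "generating_cone K" "normal_cone K"
    and pB: "cone_preserving B K" and s: "0 < s"
    and RB: "R o\<^sub>L (s *\<^sub>R id_blinfun - B) = id_blinfun"
    and BR: "(s *\<^sub>R id_blinfun - B) o\<^sub>L R = id_blinfun" and pR: "cone_preserving R K"
  shows "spectral_radius B < s"
proof -
  have K0: "0 \<in> K" using cone_zero K by blast
  define h where "h = min (s / 2) (1 / (2 * (norm R + 1)))"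
  have h: "0 < h" "h \<le> s / 2" "h * norm R < 1"
  proof -
    have pos: "0 < 2 * norm R + 2" using norm_ge_zero[of R] by linarith
    show "0 < h" "h \<le> s / 2" using s pos by (auto simp: h_def)
    have "h * norm R \<le> (1 / (2 * (norm R + 1))) * norm R" by (intro mult_right_mono) (auto simp: h_def)
    also have "\<dots> < 1" using pos by (simp add: field_simps)
    finally show "h * norm R < 1" .
  qed
  obtain R' where R': "R' o\<^sub>L ((s - h) *\<^sub>R id_blinfun - B) = id_blinfun"
    "((s - h) *\<^sub>R id_blinfun - B) o\<^sub>L R' = id_blinfun" "cone_preserving R' K"
    using step[OF RB BR, of "s - h" K] h K(1) K0 pR by auto
  have "cone_preserving (B - B) K" using K0 by (simp add: cone_preserving_def)
  then obtain c where "\<And>n. norm (bp B n) \<le> c * (s - h) ^ n"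
    using dom[OF K pB _ _ R'(1,2,3)] h s by force
  then have "spectral_radius B \<le> s - h" by (rule sr_le) (use h in auto)
  then show ?thesis using h by simp
qed



lemma pw1: fixes R B :: "'a::real_normed_vector \<Rightarrow>\<^sub>L 'a" assumes "R o\<^sub>L (t *\<^sub>R id_blinfun - B) = id_blinfun" shows "R (t *\<^sub>R x - B x) = x"
  using arg_cong[where f="\<lambda>F. blinfun_apply F x", OF assms] by (simp add: blinfun.diff_left blinfun.scaleR_left)
lemma pw2: fixes R B :: "'a::real_normed_vector \<Rightarrow>\<^sub>L 'a" assumes "(t *\<^sub>R id_blinfun - B) o\<^sub>L R = id_blinfun" shows "t *\<^sub>R R x - B (R x) = x"
  using arg_cong[where f="\<lambda>F. blinfun_apply F x", OF assms] by (simp add: blinfun.diff_left blinfun.scaleR_left)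
lemma pwI1: fixes R B :: "'a::real_normed_vector \<Rightarrow>\<^sub>L 'a" assumes "\<And>x. R (t *\<^sub>R x - B x) = x" shows "R o\<^sub>L (t *\<^sub>R id_blinfun - B) = id_blinfun"
  using assms by (auto intro!: blinfun_eqI simp: blinfun.diff_left blinfun.scaleR_left)
lemma pwI2: fixes R B :: "'a::real_normed_vector \<Rightarrow>\<^sub>L 'a" assumes "\<And>x. t *\<^sub>R R x - B (R x) = x" shows "(t *\<^sub>R id_blinfun - B) o\<^sub>L R = id_blinfun"
  using assms by (auto intro!: blinfun_eqI simp: blinfun.diff_left blinfun.scaleR_left)

lemma pr:
  fixes B :: "'a::banach \<Rightarrow>\<^sub>L 'a"
  assumes K: "is_cone K" "generating_cone K" and pB: "cone_preserving B K"
    and r: "spectral_radius B < s"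
  shows "\<exists>R. R o\<^sub>L (s *\<^sub>R id_blinfun - B) = id_blinfun \<and> (s *\<^sub>R id_blinfun - B) o\<^sub>L R = id_blinfun
     \<and> cone_preserving R K"
proof -
  have K0: "0 \<in> K" using cone_zero K by blast
  define Ri where "Ri t = op_inverse (t *\<^sub>R id_blinfun - B)" for t
  have inv: "Ri t o\<^sub>L (t *\<^sub>R id_blinfun - B) = id_blinfun \<and> (t *\<^sub>R id_blinfun - B) o\<^sub>L Ri t = id_blinfun"
    if "spectral_radius B < t" for t
    using real_inv[OF that] op_inverse_eq unfolding Ri_def by metis
  have s0: "0 < s" using sr_nonneg[of B] r by linarith
  define L where "L = norm B + s + 1"
  have posL: "cone_preserving (Ri t) K" if t: "norm B < t" for t
  proof -
    have t0: "0 < t" using t norm_ge_zero[of B] by linarith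
    define R0 :: "'a \<Rightarrow>\<^sub>L 'a" where "R0 = (1 / t) *\<^sub>R id_blinfun"
    have a1: "R0 o\<^sub>L (t *\<^sub>R id_blinfun) = id_blinfun" "(t *\<^sub>R id_blinfun) o\<^sub>L R0 = id_blinfun"
      using t0 by (auto intro!: blinfun_eqI simp: R0_def blinfun.scaleR_left)
    have nR0: "norm R0 \<le> 1 / t" unfolding R0_def using norm_blinfun_id_le[where 'a='a] t0
      by (simp add: divide_right_mono)
    have "norm R0 * norm B \<le> (1 / t) * norm B" by (intro mult_right_mono nR0) auto
    also have "\<dots> < 1" using t t0 by (simp add: field_simps)
    finally obtain R' where R': "R' o\<^sub>L (t *\<^sub>R id_blinfun - B) = id_blinfun"
      "(t *\<^sub>R id_blinfun - B) o\<^sub>L R' = id_blinfun" "\<forall>x. (\<lambda>k. bp (R0 o\<^sub>L B) k (R0 x)) sums R' x"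
      using perturb[OF a1] by blast
    have "cone_preserving R0 K" using t0 by (auto simp: cone_preserving_def R0_def blinfun.scaleR_left intro: cone_scale[OF K(1)])
    then have "cone_preserving R' K" by (rule perturb_pos[OF K(1) K0 _ pB R'(3)])
    moreover have "Ri t = R'" unfolding Ri_def by (rule op_inverse_eq[OF R'(1,2)])
    ultimately show ?thesis by simp
  qed
  define D where "D = {t. s \<le> t \<and> t \<le> L \<and> cone_preserving (Ri t) K}"
  have LD: "L \<in> D" using posL[of L] s0 by (auto simp: D_def L_def)
  have bD: "bdd_below D" by (rule bdd_belowI[of _ s]) (auto simp: D_def)
  define ts where "ts = Inf D"
  have ts: "s \<le> ts" "ts \<le> L"
    using LD bD by (auto simp: ts_def D_def intro!: cInf_greatest cInf_lower)
  have invts: "Ri ts o\<^sub>L (ts *\<^sub>R id_blinfun - B) = id_blinfun" "(ts *\<^sub>R id_blinfun - B) o\<^sub>L Ri ts = id_blinfun"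
    using inv[of ts] ts r by auto
  define M where "M = norm (Ri ts)"
  have M0: "0 \<le> M" by (simp add: M_def)
  define \<delta> where "\<delta> = 1 / (4 * (M + 1))"
  have \<delta>0: "0 < \<delta>" using M0 by (simp add: \<delta>_def)
  have "Inf D < ts + \<delta>" using \<delta>0 by (simp add: ts_def)
  then obtain u where u: "u \<in> D" "u < ts + \<delta>" using cInf_less_iff[of D] LD bD by blast
  have tu: "ts \<le> u" using u bD by (auto simp: ts_def intro: cInf_lower)
  have invu: "Ri u o\<^sub>L (u *\<^sub>R id_blinfun - B) = id_blinfun" "(u *\<^sub>R id_blinfun - B) o\<^sub>L Ri u = id_blinfun"
    using inv[of u] u r by (auto simp: D_def)
  have pu: "cone_preserving (Ri u) K" using u by (simp add: D_def)
  have x14: "\<bar>ts - u\<bar> * M \<le> 1/4"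
  proof -
    have "\<bar>ts - u\<bar> * M \<le> \<delta> * M" using tu u M0 by (intro mult_right_mono) auto
    also have "\<dots> \<le> 1/4" using M0 by (simp add: \<delta>_def field_simps)
    finally show ?thesis .
  qed
  obtain Ru where Ru: "Ru o\<^sub>L (u *\<^sub>R id_blinfun - B) = id_blinfun" "(u *\<^sub>R id_blinfun - B) o\<^sub>L Ru = id_blinfun"
    "norm Ru \<le> M / (1 - \<bar>ts - u\<bar> * M)"
    using step[OF invts, of u] x14 unfolding M_def by (auto simp: mult.commute)
  have "Ri u = Ru" unfolding Ri_def by (rule op_inverse_eq[OF Ru(1,2)])
  moreover have "M / (1 - \<bar>ts - u\<bar> * M) \<le> M / (1/2)" using x14 M0 by (intro divide_left_mono) auto
  ultimately have nRu: "norm (Ri u) \<le> 2 * M" using Ru(3) by simp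
  define h0 where "h0 = 1 / (4 * M + 2)"
  have h0: "0 < h0" "\<delta> < h0" using M0 by (auto simp: h0_def \<delta>_def field_simps)
  have stepu: "cone_preserving (Ri v) K \<and> Ri v o\<^sub>L (v *\<^sub>R id_blinfun - B) = id_blinfun" if v: "u - h0 \<le> v" "v \<le> u" for v
  proof -
    have "\<bar>u - v\<bar> * norm (Ri u) \<le> h0 * (2 * M)" using v nRu h0 by (intro mult_mono) auto
    also have "\<dots> < 1" using M0 by (simp add: h0_def field_simps)
    finally obtain Rv where Rv: "Rv o\<^sub>L (v *\<^sub>R id_blinfun - B) = id_blinfun" "(v *\<^sub>R id_blinfun - B) o\<^sub>L Rv = id_blinfun"
      "cone_preserving Rv K"
      using step[OF invu, of v K] K(1) K0 pu v by auto
    have "Ri v = Rv" unfolding Ri_def by (rule op_inverse_eq[OF Rv(1,2)])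
    then show ?thesis using Rv by simp
  qed
  have "s \<in> D"
  proof (cases "u - h0 \<le> s")
    case True
    then show ?thesis using stepu[of s] ts tu s0 LD by (auto simp: D_def)
  next
    case False
    then have "u - h0 \<in> D" using stepu[of "u - h0"] h0 u by (auto simp: D_def)
    then have "ts \<le> u - h0" using bD by (auto simp: ts_def intro: cInf_lower)
    then show ?thesis using u h0 by linarith
  qed
  then show ?thesis using inv[OF r] by (auto simp: D_def)
qed



theorem lemma3p1:
  fixes K :: "'a::banach set" and A T F :: "'a \<Rightarrow>\<^sub>L 'a"
  assumes "is_cone K" and "generating_cone K" and "normal_cone K"
    and "cone_preserving A K"
    and "A = T + F"
    and "cone_preserving T K" and "cone_preserving F K"
    and "spectral_radius T < 1"
    and "spectral_radius (F o\<^sub>L op_inverse (id_blinfun - T)) > 0"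
  shows "spectral_radius (T + (1 / spectral_radius (F o\<^sub>L op_inverse (id_blinfun - T))) *\<^sub>R F) = 1"
proof -
  note K = assms(1,2,3)
  have K0: "0 \<in> K" using cone_zero K by blast
  note pT = assms(6) and pF = assms(7)
  have cp: "\<And>B x. cone_preserving B K \<Longrightarrow> x \<in> K \<Longrightarrow> B x \<in> K" by (auto simp: cone_preserving_def)
  have cadd: "\<And>x y. x \<in> K \<Longrightarrow> y \<in> K \<Longrightarrow> x + y \<in> K" using cone_add[OF K(1)] by blast
  have csc: "\<And>x a. x \<in> K \<Longrightarrow> 0 \<le> a \<Longrightarrow> a *\<^sub>R x \<in> K" using cone_scale[OF K(1)] by blast
  obtain W where W: "W o\<^sub>L (1 *\<^sub>R id_blinfun - T) = id_blinfun" "(1 *\<^sub>R id_blinfun - T) o\<^sub>L W = id_blinfun"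
    "cone_preserving W K"
    using pr[OF K(1,2) pT assms(8)] by blast
  have Wa: "W x - T (W x) = x" for x using pw2[OF W(2)] by simp
  have Wb: "W (x - T x) = x" for x using pw1[OF W(1)] by simp
  have "op_inverse (id_blinfun - T) = W" using op_inverse_eq[OF W(1,2)] by simp
  define N where "N = F o\<^sub>L W"
  define \<rho> where "\<rho> = spectral_radius N"
  have rho: "0 < \<rho>" using assms(9) by (simp add: \<rho>_def N_def \<open>op_inverse (id_blinfun - T) = W\<close>)
  have pN: "cone_preserving N K" using pF W(3) by (auto simp: N_def cone_preserving_def)
  define S where "S = T + (1 / \<rho>) *\<^sub>R F"
  have Sx: "S x = T x + (1 / \<rho>) *\<^sub>R F x" for x by (simp add: S_def blinfun.add_left blinfun.scaleR_left)
  have pS: "cone_preserving S K"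
    using pT pF rho by (auto simp: cone_preserving_def Sx intro!: cadd csc)
  have goal: "spectral_radius S = 1"
  proof (rule ccontr)
    assume ne: "spectral_radius S \<noteq> 1"
    show False
    proof (cases "spectral_radius S < 1")
      case True
      obtain RS where RS: "RS o\<^sub>L (1 *\<^sub>R id_blinfun - S) = id_blinfun" "(1 *\<^sub>R id_blinfun - S) o\<^sub>L RS = id_blinfun"
        "cone_preserving RS K"
        using pr[OF K(1,2) pS True] by blast
      have RSa: "RS x - S (RS x) = x" for x using pw2[OF RS(2)] by simp
      have RSb: "RS (x - S x) = x" for x using pw1[OF RS(1)] by simp
      define Q where "Q = (1 / \<rho>) *\<^sub>R ((id_blinfun - T) o\<^sub>L RS)"
      have Qx: "Q x = (1 / \<rho>) *\<^sub>R (RS x - T (RS x))" for x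
        by (simp add: Q_def blinfun.scaleR_left blinfun.diff_left)
      have Qx2: "RS x - T (RS x) = x + (1 / \<rho>) *\<^sub>R F (RS x)" for x
        using RSa[of x] by (simp add: Sx algebra_simps)
      have pQ: "cone_preserving Q K"
        unfolding cone_preserving_def Qx Qx2 using rho RS(3) pF
        by (auto intro!: csc cadd cp[of F] cp[of RS])
      have i1: "Q (\<rho> *\<^sub>R x - N x) = x" for x
      proof -
        have "\<rho> *\<^sub>R W x - S (\<rho> *\<^sub>R W x) = \<rho> *\<^sub>R (W x - T (W x)) - F (W x)"
          using rho by (simp add: Sx blinfun.scaleR_right scaleR_diff_right algebra_simps)
        then have "\<rho> *\<^sub>R x - N x = \<rho> *\<^sub>R W x - S (\<rho> *\<^sub>R W x)"
          using Wa[of x] by (simp add: N_def)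
        then have "RS (\<rho> *\<^sub>R x - N x) = \<rho> *\<^sub>R W x" using RSb by simp
        then show ?thesis using Wa[of x] rho by (simp add: Qx blinfun.scaleR_right algebra_simps)
      qed
      have i2: "\<rho> *\<^sub>R Q x - N (Q x) = x" for x
      proof -
        have "W (Q x) = (1 / \<rho>) *\<^sub>R RS x" using Wb[of "RS x"] by (simp add: Qx blinfun.scaleR_right)
        then have "\<rho> *\<^sub>R Q x - N (Q x) = RS x - S (RS x)"
          using rho by (simp add: N_def Qx Sx blinfun.scaleR_right algebra_simps)
        then show ?thesis using RSa by simp
      qed
      have "spectral_radius N < \<rho>" by (rule kl[OF K pN rho pwI1 pwI2 pQ]) (use i1 i2 in auto)
      then show False by (simp add: \<rho>_def)
    next
      case False
      then have gt: "1 < spectral_radius S" using ne by simp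
      define l where "l = (1 + spectral_radius S) / 2"
      have l: "1 < l" "l < spectral_radius S" using gt by (auto simp: l_def)
      obtain Wl where Wl: "Wl o\<^sub>L (l *\<^sub>R id_blinfun - T) = id_blinfun" "(l *\<^sub>R id_blinfun - T) o\<^sub>L Wl = id_blinfun"
        "cone_preserving Wl K"
        using pr[OF K(1,2) pT, of l] assms(8) l by auto
      have Wla: "l *\<^sub>R Wl x - T (Wl x) = x" for x using pw2[OF Wl(2)] by simp
      have Wlb: "Wl (l *\<^sub>R x - T x) = x" for x using pw1[OF Wl(1)] by simp
      define Bl where "Bl = l *\<^sub>R (F o\<^sub>L Wl)"
      have pBl: "cone_preserving Bl K" using pF Wl(3) l
        by (auto simp: Bl_def cone_preserving_def blinfun.scaleR_left intro!: csc)
      have WW: "W x - l *\<^sub>R Wl x = (l - 1) *\<^sub>R Wl (T (W x))" for x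
      proof -
        have "l *\<^sub>R (W x - l *\<^sub>R Wl x) - T (W x - l *\<^sub>R Wl x) = (l - 1) *\<^sub>R T (W x)"
        proof -
          have "l *\<^sub>R (W x - l *\<^sub>R Wl x) - T (W x - l *\<^sub>R Wl x)
              = l *\<^sub>R W x - T (W x) - l *\<^sub>R (l *\<^sub>R Wl x - T (Wl x))"
            by (simp add: blinfun.diff_right blinfun.scaleR_right algebra_simps)
          also have "\<dots> = l *\<^sub>R W x - T (W x) - l *\<^sub>R x" using Wla by simp
          also have "\<dots> = (l - 1) *\<^sub>R T (W x)" using Wa[of x]
            by (metis (no_types, lifting) add_diff_cancel_left' diff_add_cancel scaleR_diff_left scaleR_one
                diff_diff_eq2 scaleR_diff_right)
          finally show ?thesis .
        qed
        then have "Wl (l *\<^sub>R (W x - l *\<^sub>R Wl x) - T (W x - l *\<^sub>R Wl x)) = Wl ((l - 1) *\<^sub>R T (W x))" by simp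
        then show ?thesis using Wlb by (simp add: blinfun.scaleR_right)
      qed
      have pNB: "cone_preserving (N - Bl) K"
      proof -
        have "(N - Bl) x = F (W x - l *\<^sub>R Wl x)" for x
          by (simp add: N_def Bl_def blinfun.diff_left blinfun.scaleR_left blinfun.diff_right blinfun.scaleR_right)
        then have "(N - Bl) x = F ((l - 1) *\<^sub>R Wl (T (W x)))" for x
          using WW[of x] by simp
        then show ?thesis using pF Wl(3) pT W(3) l
          by (auto simp: cone_preserving_def intro!: csc cp[of F] cp[of Wl] cp[of T] cp[of W])
      qed
      define s1 where "s1 = (\<rho> + \<rho> * l) / 2"
      have rl: "\<rho> < \<rho> * l" using mult_strict_left_mono[OF l(1) rho] by simp
      have s1a: "\<rho> < s1" unfolding s1_def using rho rl by (simp add: field_simps)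
      have s1b: "s1 < l * \<rho>" unfolding s1_def using rho rl by (simp add: field_simps)
      have rl2: "0 < \<rho> * l" by (rule mult_pos_pos[OF rho]) (use l in linarith)
      have s1c: "0 < s1" unfolding s1_def using add_pos_pos[OF rho rl2] by simp
      note s1 = s1a s1b s1c
      obtain RN where RN: "RN o\<^sub>L (s1 *\<^sub>R id_blinfun - N) = id_blinfun" "(s1 *\<^sub>R id_blinfun - N) o\<^sub>L RN = id_blinfun"
        "cone_preserving RN K"
        using pr[OF K(1,2) pN, of s1] s1 by (auto simp: \<rho>_def)
      obtain c where c: "\<And>n. norm (bp Bl n) \<le> c * s1 ^ n"
        using dom[OF K pBl pNB s1(3) RN] by blast
      define Nl where "Nl = (1 / (l * \<rho>)) *\<^sub>R Bl"
      have Nlx: "Nl x = (1 / \<rho>) *\<^sub>R F (Wl x)" for x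
        using l rho by (simp add: Nl_def Bl_def blinfun.scaleR_left)
      have pNl: "cone_preserving Nl K" using pF Wl(3) rho by (auto simp: Nlx cone_preserving_def intro!: csc)
      have "norm (bp Nl n) \<le> c * (s1 / (l * \<rho>)) ^ n" for n
      proof -
        have "norm (bp Nl n) = (1 / (l * \<rho>)) ^ n * norm (bp Bl n)"
          using l rho by (simp add: Nl_def bp_scale)
        also have "\<dots> \<le> (1 / (l * \<rho>)) ^ n * (c * s1 ^ n)" by (intro mult_left_mono c) (use l rho in auto)
        also have "\<dots> = c * (s1 / (l * \<rho>)) ^ n" by (simp add: power_divide field_simps)
        finally show ?thesis .
      qed
      then have "spectral_radius Nl \<le> s1 / (l * \<rho>)" by (rule sr_le) (use s1 l rho in auto)
      also have "\<dots> < 1" using s1 l rho by (simp add: field_simps)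
      finally obtain P where P: "P o\<^sub>L (1 *\<^sub>R id_blinfun - Nl) = id_blinfun" "(1 *\<^sub>R id_blinfun - Nl) o\<^sub>L P = id_blinfun"
        "cone_preserving P K"
        using pr[OF K(1,2) pNl] by blast
      have Pa: "P x - Nl (P x) = x" for x using pw2[OF P(2)] by simp
      have Pb: "P (x - Nl x) = x" for x using pw1[OF P(1)] by simp
      define Z where "Z = Wl o\<^sub>L P"
      have pZ: "cone_preserving Z K" using Wl(3) P(3) by (auto simp: Z_def cone_preserving_def)
      have z1: "Z (l *\<^sub>R x - S x) = x" for x
      proof -
        have "l *\<^sub>R x - S x = (l *\<^sub>R x - T x) - Nl (l *\<^sub>R x - T x)"
          using Wlb[of x] by (simp add: Nlx Sx)
        then have "Z (l *\<^sub>R x - S x) = Wl (P ((l *\<^sub>R x - T x) - Nl (l *\<^sub>R x - T x)))"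
          unfolding Z_def by (simp only: blinfun_apply_blinfun_compose)
        also have "\<dots> = Wl (l *\<^sub>R x - T x)" by (simp only: Pb)
        also have "\<dots> = x" by (rule Wlb)
        finally show ?thesis .
      qed
      have z2: "l *\<^sub>R Z x - S (Z x) = x" for x
      proof -
        have "l *\<^sub>R Z x - S (Z x) = (l *\<^sub>R Wl (P x) - T (Wl (P x))) - Nl (P x)"
          by (simp add: Z_def Sx Nlx)
        then show ?thesis using Wla Pa by simp
      qed
      have "spectral_radius S < l"
        by (rule kl[OF K pS _ pwI1 pwI2 pZ]) (use z1 z2 l in auto)
      then show False using l by simp
    qed
  qed
  then show ?thesis by (simp add: S_def \<rho>_def N_def \<open>op_inverse (id_blinfun - T) = W\<close>)
qed


end
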